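(* Consider the balls-to-bins problem with a fixed family of bijections $f_{p,q}$. Fix a contiguous interval $U$ of the operation sequence (the node $u$), partitioned into consecutive sub-intervals called segments. Let $\mathcal I_1,\mathcal I_2$ be two sequences of insertions during $U$ (preceded by the same fixed operations) that both start at state $(p_{st},q_{st})$ and both end at state $(p_{end},q_{end})$, with $p_{end}-p_{st}=q_{end}-q_{st}$. Let $\mathrm{dist}(\mathcal I_1,\mathcal I_2)$ be the number of balls among $a_{p_{st}+1},\dots,a_{p_{end}},b_{q_{st}+1},\dots,b_{q_{end}}$ that are inserted in different segments under $\mathcal I_1$ and under $\mathcal I_2$. Then $\mathrm{cost}_u(\mathcal I_1)+\mathrm{cost}_u(\mathcal I_2)\ge \tfrac12\,\mathrm{dist}(\mathcal I_1,\mathcal I_2)$.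
   Context: Balls-to-bins problem: the state is $(p,q)$; there are balls $a_1,\dots,a_p,b_1,\dots,b_q$ and bins $1,\dots,p+q$, and the placement is a bijection $f_{p,q}$ from balls to bins depending only on $(p,q)$. An insertion increments $p$ (creating ball $a_{p+1}$) or $q$ (creating ball $b_{q+1}$), together with a new bin, and the placement switches from $f_{p,q}$ to the new bijection. A ball is moved at operation $t$ if it is created at $t$ or its bin changes at $t$. For a sequence $\mathcal I$ and the interval $U$ with segments, $\mathrm{cost}_u(\mathcal I)$ is the number of pairs $(x,t_2)$ such that ball $x$ is moved at operation $t_2$, the previous operation $t_1<t_2$ at which $x$ was moved exists, and $t_1,t_2$ both lie in $U$ but in different segments. *)

theory Defs
  imports Complex_Main
begin

text \<open>Balls a_i (written A i) and b_j (written B j), indices starting at 1.\<close>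
datatype ball = A nat | B nat

definition balls :: "nat \<Rightarrow> nat \<Rightarrow> ball set" where
  "balls p q = A ` {1..p} \<union> B ` {1..q}"

text \<open>An operation sequence is a list of insertions: True = insert a (increment p),
  False = insert b (increment q).  The process starts at state (0,0); operation t
  (1-based) is the t-th list element; the state after t operations: \<close>
definition state :: "bool list \<Rightarrow> nat \<Rightarrow> nat \<times> nat" where
  "state ops t = (count_list (take t ops) True, count_list (take t ops) False)"

definition balls_at :: "bool list \<Rightarrow> nat \<Rightarrow> ball set" where
  "balls_at ops t = balls (fst (state ops t)) (snd (state ops t))"

definition bin_at :: "(nat \<Rightarrow> nat \<Rightarrow> ball \<Rightarrow> nat) \<Rightarrow> bool list \<Rightarrow> nat \<Rightarrow> ball \<Rightarrow> nat" where
  "bin_at f ops t x = f (fst (state ops t)) (snd (state ops t)) x"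

definition moved :: "(nat \<Rightarrow> nat \<Rightarrow> ball \<Rightarrow> nat) \<Rightarrow> bool list \<Rightarrow> ball \<Rightarrow> nat \<Rightarrow> bool" where
  "moved f ops x t \<longleftrightarrow> 1 \<le> t \<and> t \<le> length ops \<and> x \<in> balls_at ops t \<and>
      (x \<notin> balls_at ops (t - 1) \<or> bin_at f ops (t - 1) x \<noteq> bin_at f ops t x)"

text \<open>The segment of the k-th operation of U (k = 0,1,...) is seg k,
  where seg is monotone, so segments are consecutive sub-intervals.\<close>
definition in_U :: "bool list \<Rightarrow> bool list \<Rightarrow> nat \<Rightarrow> bool" where
  "in_U pre I t \<longleftrightarrow> length pre < t \<and> t \<le> length pre + length I"

definition seg_of :: "(nat \<Rightarrow> nat) \<Rightarrow> bool list \<Rightarrow> nat \<Rightarrow> nat" where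
  "seg_of seg pre t = seg (t - length pre - 1)"

definition cost_u :: "(nat \<Rightarrow> nat \<Rightarrow> ball \<Rightarrow> nat) \<Rightarrow> (nat \<Rightarrow> nat) \<Rightarrow> bool list \<Rightarrow> bool list \<Rightarrow> nat" where
  "cost_u f seg pre I = card {(x, t2). moved f (pre @ I) x t2 \<and>
      (\<exists>t1. t1 < t2 \<and> moved f (pre @ I) x t1 \<and>
            (\<forall>t. t1 < t \<and> t < t2 \<longrightarrow> \<not> moved f (pre @ I) x t) \<and>
            in_U pre I t1 \<and> in_U pre I t2 \<and> seg_of seg pre t1 \<noteq> seg_of seg pre t2)}"

definition ins_time :: "bool list \<Rightarrow> ball \<Rightarrow> nat" where
  "ins_time ops x = (LEAST t. x \<in> balls_at ops t)"

definition dist :: "(nat \<Rightarrow> nat) \<Rightarrow> bool list \<Rightarrow> bool list \<Rightarrow> bool list \<Rightarrow> nat" where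
  "dist seg pre I1 I2 =
     card {x \<in> A ` {count_list pre True + 1 .. count_list (pre @ I1) True}
               \<union> B ` {count_list pre False + 1 .. count_list (pre @ I1) False}.
           seg_of seg pre (ins_time (pre @ I1) x) \<noteq> seg_of seg pre (ins_time (pre @ I2) x)}"

end

theory Submission
  imports Defs
begin


lemma count_sum: "count_list xs True + count_list xs False = length xs"
  by (induction xs) auto

lemma state_sum: "fst (state ops t) + snd (state ops t) = min t (length ops)"
  unfolding state_def using count_sum[of "take t ops"] by simp

lemma balls_mono: "p \<le> p' \<Longrightarrow> q \<le> q' \<Longrightarrow> balls p q \<subseteq> balls p' q'"
  unfolding balls_def by auto

lemma finite_balls: "finite (balls p q)"
  unfolding balls_def by auto

lemma count_take_mono: "t \<le> t' \<Longrightarrow> count_list (take t ops) b \<le> count_list (take t' ops) b"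
proof -
  assume "t \<le> t'"
  then have "take t' ops = take t ops @ take (t' - t) (drop t ops)"
    by (metis le_add_diff_inverse take_add)
  then show ?thesis by (metis count_list_append le_add1)
qed

lemma balls_at_mono: "t \<le> t' \<Longrightarrow> balls_at ops t \<subseteq> balls_at ops t'"
  unfolding balls_at_def state_def
  by (simp add: balls_mono count_take_mono)

lemma bin_at_fun: "bin_at f ops t = f (fst (state ops t)) (snd (state ops t))"
  by (rule ext) (simp add: bin_at_def)

lemma bin_bij:
  assumes bij: "\<And>p q. bij_betw (f p q) (balls p q) {1..p + q}"
  shows "bij_betw (bin_at f ops t) (balls_at ops t) {1..min t (length ops)}"
  using bij[of "fst (state ops t)" "snd (state ops t)"]
  unfolding bin_at_fun balls_at_def state_sum .

lemma state_pre: "t \<le> length pre \<Longrightarrow> state (pre @ J) t = state pre t"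
  unfolding state_def by simp

lemma balls_at_pre: "t \<le> length pre \<Longrightarrow> balls_at (pre @ J) t = balls_at pre t"
  unfolding balls_at_def by (simp add: state_pre)

lemma bin_at_pre: "t \<le> length pre \<Longrightarrow> bin_at f (pre @ J) t = bin_at f pre t"
  unfolding bin_at_fun by (simp add: state_pre)

lemma moved_le: "moved f ops x t \<Longrightarrow> t \<le> length ops \<and> x \<in> balls_at ops t"
  unfolding moved_def by auto

lemma no_move_bin:
  assumes "x \<in> balls_at ops a" "a \<le> b" "b \<le> length ops"
    and "\<And>s. a < s \<Longrightarrow> s \<le> b \<Longrightarrow> \<not> moved f ops x s"
  shows "bin_at f ops b x = bin_at f ops a x"
  using assms
proof (induction b)
  case 0
  then show ?case by simp
next
  case (Suc b)
  show ?case
  proof (cases "a = Suc b")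
    case True then show ?thesis by simp
  next
    case False
    then have ab: "a \<le> b" using Suc by simp
    have IH: "bin_at f ops b x = bin_at f ops a x" using Suc ab by auto
    have pb: "x \<in> balls_at ops b" using balls_at_mono[OF ab] Suc by auto
    have pb1: "x \<in> balls_at ops (Suc b)" using balls_at_mono[of b "Suc b"] pb by auto
    have "\<not> moved f ops x (Suc b)" using Suc ab by auto
    then have "bin_at f ops b x = bin_at f ops (Suc b) x"
      using pb pb1 Suc.prems(3) unfolding moved_def by auto
    then show ?thesis using IH by simp
  qed
qed

lemma appear:
  assumes "x \<in> balls_at ops b" "x \<notin> balls_at ops a" "a \<le> b" "b \<le> length ops"
  shows "\<exists>s. a < s \<and> s \<le> b \<and> moved f ops x s"
  using assms
proof (induction b)
  case 0
  then show ?case by simp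
next
  case (Suc b)
  show ?case
  proof (cases "x \<in> balls_at ops b")
    case True
    have "a \<noteq> Suc b" using Suc.prems(1,2) by auto
    then have ab: "a \<le> b" using Suc.prems(3) by simp
    obtain s where "a < s" "s \<le> b" "moved f ops x s"
      using Suc.IH[OF True Suc.prems(2) ab] Suc.prems(4) by auto
    then show ?thesis by (intro exI[of _ s]) auto
  next
    case False
    then have m: "moved f ops x (Suc b)" using Suc.prems unfolding moved_def by auto
    have "a \<noteq> Suc b" using Suc.prems(1,2) by auto
    then have "a < Suc b" using Suc.prems(3) by simp
    then show ?thesis using m by blast
  qed
qed

lemma seg_change:
  fixes h :: "nat \<Rightarrow> nat"
  shows "i \<le> j \<Longrightarrow> h i \<noteq> h j \<Longrightarrow> \<exists>k. i \<le> k \<and> k < j \<and> h k \<noteq> h (Suc k)"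
proof (induction j)
  case 0 then show ?case by simp
next
  case (Suc j)
  show ?case
  proof (cases "i = Suc j")
    case True then show ?thesis using Suc by simp
  next
    case False
    then have "i \<le> j" using Suc by simp
    then show ?thesis using Suc by (metis less_Suc_eq)
  qed
qed

definition Pset :: "(nat \<Rightarrow> nat \<Rightarrow> ball \<Rightarrow> nat) \<Rightarrow> (nat \<Rightarrow> nat) \<Rightarrow> bool list \<Rightarrow> bool list \<Rightarrow> (ball \<times> nat) set" where
  "Pset f seg pre I = {(x, t2). moved f (pre @ I) x t2 \<and>
      (\<exists>t1. t1 < t2 \<and> moved f (pre @ I) x t1 \<and>
            (\<forall>t. t1 < t \<and> t < t2 \<longrightarrow> \<not> moved f (pre @ I) x t) \<and>
            in_U pre I t1 \<and> in_U pre I t2 \<and> seg_of seg pre t1 \<noteq> seg_of seg pre t2)}"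

lemma cost_Pset: "cost_u f seg pre I = card (Pset f seg pre I)"
  unfolding cost_u_def Pset_def ..

lemma finite_Pset: "finite (Pset f seg pre I)"
proof -
  have "Pset f seg pre I \<subseteq> balls_at (pre @ I) (length (pre @ I)) \<times> {..length (pre @ I)}"
  proof
    fix z assume "z \<in> Pset f seg pre I"
    then obtain x t where z: "z = (x, t)" "moved f (pre @ I) x t" unfolding Pset_def by blast
    then have "t \<le> length (pre @ I)" "x \<in> balls_at (pre @ I) t" using moved_le[OF z(2)] by auto
    then show "z \<in> balls_at (pre @ I) (length (pre @ I)) \<times> {..length (pre @ I)}"
      using z balls_at_mono[of t "length (pre @ I)" "pre @ I"] by auto
  qed
  moreover have "finite (balls_at (pre @ I) (length (pre @ I)))"
    unfolding balls_at_def by (rule finite_balls)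
  ultimately show ?thesis by (meson finite_SigmaI finite_atMost finite_subset)
qed

lemma seg_of_mono:
  assumes "mono_on {..<length I} seg" "length pre < a" "a \<le> b" "b \<le> length pre + length I"
  shows "seg_of seg pre a \<le> seg_of seg pre b"
  unfolding seg_of_def using assms by (intro mono_onD[OF assms(1)]) auto

lemma charge:
  fixes f :: "nat \<Rightarrow> nat \<Rightarrow> ball \<Rightarrow> nat" and seg :: "nat \<Rightarrow> nat"
    and pre I :: "bool list" and tau s0 s1 :: nat
  assumes mono: "mono_on {..<length I} seg"
    and s0: "length pre < s0" "s0 \<le> tau" "moved f (pre @ I) x s0"
    and s1: "tau < s1" "moved f (pre @ I) x s1"
    and sg: "seg_of seg pre tau < seg_of seg pre (Suc tau)"
    and tlim: "Suc tau \<le> length pre + length I"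
  shows "(x, LEAST s. tau < s \<and> moved f (pre @ I) x s) \<in> Pset f seg pre I"
proof -
  let ?m = "moved f (pre @ I) x"
  define t2 where "t2 = (LEAST s. tau < s \<and> ?m s)"
  have t2: "tau < t2" "?m t2" using LeastI[of "\<lambda>s. tau < s \<and> ?m s", OF conjI[OF s1]] t2_def by auto
  have t2b: "\<And>s. tau < s \<Longrightarrow> s < t2 \<Longrightarrow> \<not> ?m s" using not_less_Least t2_def by blast
  define t1 where "t1 = (GREATEST s. s \<le> tau \<and> ?m s)"
  have t1: "t1 \<le> tau" "?m t1" using GreatestI_nat[of "\<lambda>s. s \<le> tau \<and> ?m s" s0 tau] s0 t1_def by auto
  have t1g: "s0 \<le> t1" using Greatest_le_nat[of "\<lambda>s. s \<le> tau \<and> ?m s" s0 tau] s0 t1_def by auto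
  have t1b: "\<And>s. t1 < s \<Longrightarrow> s \<le> tau \<Longrightarrow> \<not> ?m s"
    using Greatest_le_nat[of "\<lambda>s. s \<le> tau \<and> ?m s" _ tau] t1_def by fastforce
  have t2le: "t2 \<le> length pre + length I" using moved_le[OF t2(2)] by simp
  have "seg_of seg pre t1 \<le> seg_of seg pre tau"
    using seg_of_mono[OF mono] t1 t1g s0 tlim by simp
  moreover have "seg_of seg pre (Suc tau) \<le> seg_of seg pre t2"
    using seg_of_mono[OF mono, where a="Suc tau" and b=t2] t2 t2le s0 by simp
  ultimately have "seg_of seg pre t1 \<noteq> seg_of seg pre t2" using sg by simp
  moreover have "\<forall>t. t1 < t \<and> t < t2 \<longrightarrow> \<not> ?m t"
    using t1b t2b by (meson not_less)
  moreover have "in_U pre I t1"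
    using t1(1) t1g s0(1) tlim by (simp add: in_U_def)
  moreover have "in_U pre I t2"
    using t2(1) t2le s0(1,2) by (simp add: in_U_def)
  ultimately have "t1 < t2 \<and> moved f (pre @ I) x t1 \<and>
            (\<forall>t. t1 < t \<and> t < t2 \<longrightarrow> \<not> moved f (pre @ I) x t) \<and>
            in_U pre I t1 \<and> in_U pre I t2 \<and> seg_of seg pre t1 \<noteq> seg_of seg pre t2"
    using t1 t2 by simp
  then have "(x, t2) \<in> Pset f seg pre I"
    unfolding Pset_def using t2(2) by blast
  then show ?thesis unfolding t2_def .
qed


lemma ins_props:
  assumes "x \<in> balls_at ops b" "x \<notin> balls_at ops a"
  shows "a < ins_time ops x \<and> ins_time ops x \<le> b \<and> x \<in> balls_at ops (ins_time ops x) \<and>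
         (\<forall>t<ins_time ops x. x \<notin> balls_at ops t)"
proof -
  have m: "x \<in> balls_at ops (ins_time ops x)" unfolding ins_time_def
    by (rule LeastI[of "\<lambda>t. x \<in> balls_at ops t", OF assms(1)])
  have le: "ins_time ops x \<le> b" unfolding ins_time_def
    by (rule Least_le[of "\<lambda>t. x \<in> balls_at ops t", OF assms(1)])
  have nl: "\<forall>t<ins_time ops x. x \<notin> balls_at ops t" unfolding ins_time_def
    using not_less_Least by blast
  have "a < ins_time ops x"
  proof (rule ccontr)
    assume "\<not> a < ins_time ops x"
    then have "ins_time ops x \<le> a" by simp
    then show False using m assms(2) balls_at_mono by blast
  qed
  then show ?thesis using m le nl by blast
qed




locale twoseq =
  fixes f :: "nat \<Rightarrow> nat \<Rightarrow> ball \<Rightarrow> nat" and seg :: "nat \<Rightarrow> nat"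
    and pre J1 J2 :: "bool list" and pe qe :: nat
  assumes bij: "\<And>p q. bij_betw (f p q) (balls p q) {1..p + q}"
    and mono: "mono_on {..<length J1} seg"
    and len: "length J2 = length J1"
    and end1: "state (pre @ J1) (length (pre @ J1)) = (pe, qe)"
    and end2: "state (pre @ J2) (length (pre @ J2)) = (pe, qe)"
begin

abbreviation "L \<equiv> length pre"
abbreviation "T \<equiv> length pre + length J1"
abbreviation "o1 \<equiv> pre @ J1"
abbreviation "o2 \<equiv> pre @ J2"
abbreviation "B1 \<equiv> balls_at o1"
abbreviation "B2 \<equiv> balls_at o2"
abbreviation "c1 \<equiv> bin_at f o1"
abbreviation "c2 \<equiv> bin_at f o2"
abbreviation "sg \<equiv> seg_of seg pre"

lemma mono2: "mono_on {..<length J2} seg" using mono len by simp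

lemma B1T: "B1 T = balls pe qe" using end1 unfolding balls_at_def by simp
lemma B2T: "B2 T = balls pe qe" using end2 len unfolding balls_at_def by simp
lemma c1T: "c1 T = f pe qe" using end1 unfolding bin_at_fun by simp
lemma c2T: "c2 T = f pe qe" using end2 len unfolding bin_at_fun by simp
lemma BL: "t \<le> L \<Longrightarrow> B1 t = B2 t" by (simp add: balls_at_pre)
lemma cL: "t \<le> L \<Longrightarrow> c1 t = c2 t" by (simp add: bin_at_pre)

lemma bij1: "t \<le> T \<Longrightarrow> bij_betw (c1 t) (B1 t) {1..t}"
  using bin_bij[OF bij, of o1 t] by simp
lemma bij2: "t \<le> T \<Longrightarrow> bij_betw (c2 t) (B2 t) {1..t}"
  using bin_bij[OF bij, of o2 t] len by simp

lemma B1sub: "t \<le> T \<Longrightarrow> B1 t \<subseteq> balls pe qe" using balls_at_mono[of t T o1] B1T by simp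
lemma B2sub: "t \<le> T \<Longrightarrow> B2 t \<subseteq> balls pe qe" using balls_at_mono[of t T o2] B2T by simp

lemma Finj: "inj_on (f pe qe) (balls pe qe)" using bij bij_betw_def by blast

definition umv :: "bool list \<Rightarrow> nat \<Rightarrow> ball \<Rightarrow> bool" where
  "umv o' tau y \<longleftrightarrow> (\<exists>s. L < s \<and> s \<le> tau \<and> moved f o' y s)"
definition lat :: "bool list \<Rightarrow> nat \<Rightarrow> ball \<Rightarrow> bool" where
  "lat o' tau y \<longleftrightarrow> (\<exists>s. tau < s \<and> moved f o' y s)"
definition chg :: "bool list \<Rightarrow> nat \<Rightarrow> ball \<Rightarrow> bool" where
  "chg o' tau y \<longleftrightarrow> umv o' tau y \<and> lat o' tau y"
definition nxt :: "bool list \<Rightarrow> nat \<Rightarrow> ball \<Rightarrow> nat" where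
  "nxt o' tau y = (LEAST s. tau < s \<and> moved f o' y s)"
definition g :: "nat \<Rightarrow> ball \<Rightarrow> ball" where
  "g tau y = inv_into (B2 tau) (c2 tau) (c1 tau y)"
definition ch :: "nat \<Rightarrow> ball \<Rightarrow> nat \<Rightarrow> ball" where
  "ch tau x k = (g tau ^^ k) x"
definition stop :: "nat \<Rightarrow> ball \<Rightarrow> nat \<Rightarrow> bool" where
  "stop tau x k \<longleftrightarrow> (k = 0 \<and> chg o1 tau x) \<or>
     (0 < k \<and> (chg o2 tau (ch tau x k) \<or> chg o1 tau (ch tau x k)))"
definition Kx :: "nat \<Rightarrow> ball \<Rightarrow> nat" where
  "Kx tau x = (LEAST k. stop tau x k)"
definition phi :: "nat \<Rightarrow> ball \<Rightarrow> (ball \<times> nat) + (ball \<times> nat)" where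
  "phi tau x = (let K = Kx tau x; y = ch tau x K in
     if K = 0 then Inl (x, nxt o1 tau x)
     else if chg o2 tau y then Inr (y, nxt o2 tau y) else Inl (y, nxt o1 tau y))"
definition settled :: "nat \<Rightarrow> ball \<Rightarrow> bool" where
  "settled tau y \<longleftrightarrow> y \<in> B1 tau \<and> \<not> lat o1 tau y"

definition startp :: "nat \<Rightarrow> ball \<Rightarrow> bool" where
  "startp tau x \<longleftrightarrow> L < tau \<and> Suc tau \<le> T \<and> sg tau < sg (Suc tau) \<and>
     x \<in> B1 tau \<and> x \<notin> B2 tau \<and> x \<notin> B1 L"

lemma ch0[simp]: "ch tau x 0 = x" by (simp add: ch_def)
lemma chSuc: "ch tau x (Suc k) = g tau (ch tau x k)" by (simp add: ch_def)

context
  fixes tau x assumes st: "startp tau x"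
begin

lemma tauT: "tau \<le> T" using st unfolding startp_def by simp
lemma tauL: "L \<le> tau" using st unfolding startp_def by simp

lemma settled_bin: "settled tau y \<Longrightarrow> c1 tau y = f pe qe y \<and> y \<in> balls pe qe"
proof -
  assume s: "settled tau y"
  have "c1 T y = c1 tau y"
    using s tauT unfolding settled_def lat_def
    by (intro no_move_bin) (auto)
  then show ?thesis using c1T s B1sub[OF tauT] unfolding settled_def by auto
qed

lemma g_range: "y \<in> B1 tau \<Longrightarrow> g tau y \<in> B2 tau \<and> c2 tau (g tau y) = c1 tau y"
proof -
  assume y: "y \<in> B1 tau"
  have im: "c2 tau ` B2 tau = {1..tau}" by (rule bij_betw_imp_surj_on[OF bij2[OF tauT]])
  have "c1 tau y \<in> {1..tau}" by (rule bij_betw_apply[OF bij1[OF tauT] y])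
  then have m: "c1 tau y \<in> c2 tau ` B2 tau" using im by simp
  have "g tau y \<in> B2 tau" unfolding g_def by (rule inv_into_into[OF m])
  moreover have "c2 tau (g tau y) = c1 tau y" unfolding g_def by (rule f_inv_into_f[OF m])
  ultimately show ?thesis ..
qed

lemma g_inj: "a \<in> B1 tau \<Longrightarrow> b \<in> B1 tau \<Longrightarrow> g tau a = g tau b \<Longrightarrow> a = b"
proof -
  assume a: "a \<in> B1 tau" and b: "b \<in> B1 tau" and e: "g tau a = g tau b"
  have "c1 tau a = c1 tau b" using g_range[OF a] g_range[OF b] e by metis
  then show ?thesis using bij1[OF tauT] a b unfolding bij_betw_def inj_on_def by blast
qed

lemma distinct_ch:
  assumes "\<forall>i<m. settled tau (ch tau x i)"
  shows "i < j \<Longrightarrow> j \<le> m \<Longrightarrow> ch tau x i \<noteq> ch tau x j"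
proof (induction i arbitrary: j)
  case 0
  obtain j' where j': "j = Suc j'" using 0 by (cases j) auto
  have "settled tau (ch tau x j')" using assms 0 j' by auto
  then have "ch tau x j \<in> B2 tau" using g_range j' chSuc settled_def by auto
  then show ?case using st unfolding startp_def by auto
next
  case (Suc i)
  obtain j' where j': "j = Suc j'" using Suc by (cases j) auto
  have si: "settled tau (ch tau x i)" "settled tau (ch tau x j')" using assms Suc j' by auto
  have ne: "ch tau x i \<noteq> ch tau x j'" using Suc j' by auto
  have e1: "ch tau x (Suc i) = g tau (ch tau x i)" "ch tau x j = g tau (ch tau x j')"
    using chSuc j' by auto
  show ?case
  proof
    assume "ch tau x (Suc i) = ch tau x j"
    then have "g tau (ch tau x i) = g tau (ch tau x j')" using e1 by simp
    then show False using g_inj si ne unfolding settled_def by blast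
  qed
qed

lemma S0: "\<not> chg o1 tau x \<Longrightarrow> settled tau x"
proof -
  assume nc: "\<not> chg o1 tau x"
  have "umv o1 tau x" unfolding umv_def
    using appear[of x o1 tau L] st tauT unfolding startp_def by auto
  then show ?thesis using nc st unfolding chg_def settled_def startp_def by auto
qed

lemma Bprime:
  assumes k: "1 \<le> k" and prev: "\<forall>i<k. settled tau (ch tau x i)"
    and nc2: "\<not> chg o2 tau (ch tau x k)"
  shows "ch tau x k \<in> B2 tau \<and> c2 tau (ch tau x k) = f pe qe (ch tau x (k - 1)) \<and>
     \<not> umv o2 tau (ch tau x k) \<and> ch tau x k \<in> B1 L \<and>
     c2 tau (ch tau x k) = c1 L (ch tau x k) \<and> umv o1 tau (ch tau x k)"
proof -
  let ?y = "ch tau x k" and ?z = "ch tau x (k - 1)"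
  have ks: "k = Suc (k - 1)" using k by simp
  have zs: "settled tau ?z" using prev k by simp
  have yz: "?y = g tau ?z" using chSuc ks by metis
  have y2: "?y \<in> B2 tau" and cy: "c2 tau ?y = f pe qe ?z"
    using g_range[of ?z] zs settled_bin[OF zs] yz settled_def by auto
  have neq: "?y \<noteq> ?z" using distinct_ch[OF prev, of "k - 1" k] k by simp
  have zB: "?z \<in> balls pe qe" using settled_bin[OF zs] by simp
  have yB: "?y \<in> balls pe qe" using y2 B2sub[OF tauT] by auto
  have nu: "\<not> umv o2 tau ?y"
  proof
    assume u: "umv o2 tau ?y"
    then have nl: "\<not> lat o2 tau ?y" using nc2 chg_def by simp
    have "c2 T ?y = c2 tau ?y"
      using y2 tauT nl len unfolding lat_def by (intro no_move_bin) auto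
    then have "f pe qe ?y = f pe qe ?z" using cy c2T by simp
    then show False using inj_onD[OF Finj _ yB zB] neq by blast
  qed
  have yL: "?y \<in> B2 L"
  proof (rule ccontr)
    assume "?y \<notin> B2 L"
    then show False using appear[of ?y o2 tau L] y2 tauT tauL len nu unfolding umv_def by auto
  qed
  have c2L: "c2 tau ?y = c2 L ?y"
    using yL tauL tauT len nu unfolding umv_def by (intro no_move_bin) auto
  have u1: "umv o1 tau ?y"
  proof (rule ccontr)
    assume nu1: "\<not> umv o1 tau ?y"
    have yL1: "?y \<in> B1 L" using yL BL by simp
    have "c1 tau ?y = c1 L ?y"
      using yL1 tauL tauT nu1 unfolding umv_def by (intro no_move_bin) auto
    also have "\<dots> = c2 tau ?y" using c2L cL by simp
    also have "\<dots> = c1 tau ?z" using g_range[of ?z] zs yz settled_def by auto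
    finally have "c1 tau ?y = c1 tau ?z" .
    moreover have "?y \<in> B1 tau" using yL1 balls_at_mono[OF tauL] by auto
    moreover have "?z \<in> B1 tau" using zs settled_def by simp
    ultimately show False using inj_onD[OF bij_betw_imp_inj_on[OF bij1[OF tauT]]] neq by blast
  qed
  have "?y \<in> B1 L" using yL BL[of L] by simp
  moreover have "c2 tau ?y = c1 L ?y" using c2L cL[of L] by simp
  ultimately show ?thesis using y2 cy nu u1 by blast
qed

lemma all_settled: "(\<forall>i\<le>k. \<not> stop tau x i) \<Longrightarrow> settled tau (ch tau x k)"
proof (induction k rule: less_induct)
  case (less k)
  show ?case
  proof (cases k)
    case 0
    have "\<not> stop tau x 0" using less.prems by blast
    then have "\<not> chg o1 tau x" unfolding stop_def by simp
    then show ?thesis using S0 0 by simp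
  next
    case (Suc k')
    have prev: "\<forall>i<k. settled tau (ch tau x i)"
    proof (intro allI impI)
      fix i assume "i < k"
      then show "settled tau (ch tau x i)" using less.IH[of i] less.prems by simp
    qed
    have ns: "\<not> stop tau x k" using less.prems by blast
    then have n2: "\<not> chg o2 tau (ch tau x k)" and n1: "\<not> chg o1 tau (ch tau x k)"
      using Suc unfolding stop_def by auto
    have bp: "ch tau x k \<in> B1 L \<and> umv o1 tau (ch tau x k)"
      using Bprime[of k, OF _ prev n2] Suc by simp
    then have "ch tau x k \<in> B1 tau" using balls_at_mono[OF tauL] by auto
    then show ?thesis using bp n1 unfolding chg_def settled_def by auto
  qed
qed


lemma ex_stop: "\<exists>k. stop tau x k"
proof (rule ccontr)
  assume "\<not> (\<exists>k. stop tau x k)"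
  then have all: "\<And>k. settled tau (ch tau x k)" using all_settled by blast
  have inj: "inj (ch tau x)"
  proof (rule injI)
    fix i j assume e: "ch tau x i = ch tau x j"
    show "i = j"
    proof (rule ccontr)
      assume "i \<noteq> j"
      then consider "i < j" | "j < i" by linarith
      then show False
      proof cases
        case 1
        then show False using distinct_ch[of j i j] all e by blast
      next
        case 2
        have "ch tau x j \<noteq> ch tau x i" using distinct_ch[of i j i] all 2 by blast
        then show False using e by simp
      qed
    qed
  qed
  have "range (ch tau x) \<subseteq> B1 tau" using all settled_def by blast
  moreover have "finite (B1 tau)" unfolding balls_at_def by (rule finite_balls)
  ultimately have "finite (range (ch tau x))" by (rule finite_subset)
  then have "finite (UNIV :: nat set)" using finite_imageD inj by blast
  then show False by simp
qed

lemma K_stop: "stop tau x (Kx tau x)"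
  unfolding Kx_def using ex_stop by (rule LeastI_ex)

lemma K_min: "i < Kx tau x \<Longrightarrow> \<not> stop tau x i"
  unfolding Kx_def by (rule not_less_Least)

lemma K_settled: "i < Kx tau x \<Longrightarrow> settled tau (ch tau x i)"
proof -
  assume "i < Kx tau x"
  then have "\<forall>j\<le>i. \<not> stop tau x j" using K_min by auto
  then show ?thesis by (rule all_settled)
qed

lemma K_prev: "k \<le> Kx tau x \<Longrightarrow> \<forall>i<k. settled tau (ch tau x i)"
  using K_settled by auto

lemma K_link: "1 \<le> k \<Longrightarrow> k \<le> Kx tau x \<Longrightarrow>
   ch tau x k \<in> B2 tau \<and> c2 tau (ch tau x k) = f pe qe (ch tau x (k - 1)) \<and>
   ch tau x (k - 1) \<in> balls pe qe"
proof -
  assume k: "1 \<le> k" "k \<le> Kx tau x"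
  have zs: "settled tau (ch tau x (k - 1))" using K_settled k by simp
  have ks: "ch tau x k = g tau (ch tau x (k - 1))" using chSuc[of tau x "k - 1"] k by simp
  have "ch tau x (k - 1) \<in> B1 tau" using zs settled_def by simp
  from g_range[OF this] have "ch tau x k \<in> B2 tau \<and> c2 tau (ch tau x k) = c1 tau (ch tau x (k - 1))"
    using ks by simp
  then show ?thesis using settled_bin[OF zs] by simp
qed

lemma K_old: "1 \<le> k \<Longrightarrow> k \<le> Kx tau x \<Longrightarrow> \<not> chg o2 tau (ch tau x k) \<Longrightarrow>
   ch tau x k \<in> B1 L \<and> c2 tau (ch tau x k) = c1 L (ch tau x k)"
proof -
  assume k: "1 \<le> k" "k \<le> Kx tau x" and n: "\<not> chg o2 tau (ch tau x k)"
  show ?thesis using Bprime[OF k(1) K_prev[OF k(2)] n] by blast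
qed

lemma chg_P1: "chg o1 tau y \<Longrightarrow> (y, nxt o1 tau y) \<in> Pset f seg pre J1"
proof -
  assume c: "chg o1 tau y"
  obtain s0 where s0: "L < s0" "s0 \<le> tau" "moved f o1 y s0" using c unfolding chg_def umv_def by blast
  obtain s1 where s1: "tau < s1" "moved f o1 y s1" using c unfolding chg_def lat_def by blast
  have "sg tau < sg (Suc tau)" "Suc tau \<le> T" using st unfolding startp_def by auto
  from charge[OF mono s0 s1 this] show ?thesis unfolding nxt_def .
qed

lemma chg_P2: "chg o2 tau y \<Longrightarrow> (y, nxt o2 tau y) \<in> Pset f seg pre J2"
proof -
  assume c: "chg o2 tau y"
  obtain s0 where s0: "L < s0" "s0 \<le> tau" "moved f o2 y s0" using c unfolding chg_def umv_def by blast
  obtain s1 where s1: "tau < s1" "moved f o2 y s1" using c unfolding chg_def lat_def by blast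
  have "sg tau < sg (Suc tau)" "Suc tau \<le> length pre + length J2" using st len unfolding startp_def by auto
  from charge[OF mono2 s0 s1 this] show ?thesis unfolding nxt_def .
qed

lemma phi_cases:
  "(Kx tau x = 0 \<and> phi tau x = Inl (ch tau x (Kx tau x), nxt o1 tau x) \<and> chg o1 tau x) \<or>
   (0 < Kx tau x \<and> chg o2 tau (ch tau x (Kx tau x)) \<and>
      phi tau x = Inr (ch tau x (Kx tau x), nxt o2 tau (ch tau x (Kx tau x)))) \<or>
   (0 < Kx tau x \<and> \<not> chg o2 tau (ch tau x (Kx tau x)) \<and> chg o1 tau (ch tau x (Kx tau x)) \<and>
      phi tau x = Inl (ch tau x (Kx tau x), nxt o1 tau (ch tau x (Kx tau x))))"
  using K_stop unfolding phi_def stop_def Let_def by auto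

lemma phi_mem: "phi tau x \<in> Inl ` Pset f seg pre J1 \<union> Inr ` Pset f seg pre J2"
  using phi_cases chg_P1 chg_P2 by auto

lemma c2_nxt: "0 < Kx tau x \<Longrightarrow> chg o2 tau (ch tau x (Kx tau x)) \<Longrightarrow>
    c2 tau (ch tau x (Kx tau x)) = c2 (nxt o2 tau (ch tau x (Kx tau x)) - 1) (ch tau x (Kx tau x))"
proof -
  assume K: "0 < Kx tau x" and c: "chg o2 tau (ch tau x (Kx tau x))"
  let ?y = "ch tau x (Kx tau x)"
  let ?t = "nxt o2 tau ?y"
  obtain s1 where s1: "tau < s1" "moved f o2 ?y s1" using c unfolding chg_def lat_def by blast
  have t: "tau < ?t \<and> moved f o2 ?y ?t" unfolding nxt_def
    by (rule LeastI[of "\<lambda>s. tau < s \<and> moved f o2 ?y s", OF conjI[OF s1]])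
  have tb: "\<And>s. tau < s \<Longrightarrow> s < ?t \<Longrightarrow> \<not> moved f o2 ?y s"
    unfolding nxt_def using not_less_Least by blast
  have y2: "?y \<in> B2 tau" using K_link[of "Kx tau x"] K by simp
  have "?t \<le> length o2" using moved_le t by blast
  have "c2 (?t - 1) ?y = c2 tau ?y"
    using y2 t \<open>?t \<le> length o2\<close> tb by (intro no_move_bin) auto
  then show ?thesis by simp
qed

end

lemma phi_inj_le:
  assumes st: "startp tau x" and st': "startp tau' x'"
    and e: "phi tau x = phi tau' x'" and le: "Kx tau x \<le> Kx tau' x'"
  shows "x = x'"
proof -
  define K where "K = Kx tau x"
  define K' where "K' = Kx tau' x'"
  have KK: "K \<le> K'" using le K_def K'_def by simp
  note pc = phi_cases[OF st] and pc' = phi_cases[OF st']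
  have yy: "ch tau x K = ch tau' x' K'"
    using pc pc' e unfolding K_def K'_def by auto
  have claim: "\<And>m. m \<le> K \<Longrightarrow> ch tau x (K - m) = ch tau' x' (K' - m)"
  proof -
    fix m show "m \<le> K \<Longrightarrow> ch tau x (K - m) = ch tau' x' (K' - m)"
    proof (induction m)
      case 0
      then show ?case using yy by simp
    next
      case (Suc m)
      define k where "k = K - m"
      define k' where "k' = K' - m"
      have k1: "1 \<le> k" "k \<le> K" using Suc.prems k_def by auto
      have k1': "1 \<le> k'" "k' \<le> K'" using Suc.prems k'_def KK by auto
      define z where "z = ch tau x k"
      have zz: "ch tau' x' k' = z" using Suc k_def k'_def z_def by simp
      have cz: "c2 tau z = c2 tau' z"
      proof (cases m)
        case 0
        then have kK: "k = K" "k' = K'" using k_def k'_def by auto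
        show ?thesis
        proof (cases "chg o2 tau z")
          case True
          then have pr: "phi tau x = Inr (z, nxt o2 tau z)" using pc k1 kK z_def K_def by auto
          then have "chg o2 tau' z \<and> phi tau' x' = Inr (z, nxt o2 tau' z)"
            using pc' e zz kK K'_def by auto
          then have "nxt o2 tau z = nxt o2 tau' z" using pr e by simp
          moreover have "c2 tau z = c2 (nxt o2 tau z - 1) z"
            using c2_nxt[OF st] True k1 kK z_def K_def by simp
          moreover have "c2 tau' z = c2 (nxt o2 tau' z - 1) z"
            using c2_nxt[OF st'] \<open>chg o2 tau' z \<and> _\<close> k1' kK zz K'_def by simp
          ultimately show ?thesis by simp
        next
          case False
          then have pr: "\<exists>t. phi tau x = Inl (z, t)" using pc k1 kK z_def K_def by auto
          have "\<not> chg o2 tau' z" using pc' pr e zz kK K'_def k1' by auto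
          then have "c2 tau' z = c1 L z" using K_old[OF st' k1'[unfolded K'_def]] zz by simp
          moreover have "c2 tau z = c1 L z" using K_old[OF st k1[unfolded K_def]] False z_def by simp
          ultimately show ?thesis by simp
        qed
      next
        case (Suc m')
        have lt: "k < K" "k' < K'" using Suc k_def k'_def k1 k1' by auto
        have "\<not> stop tau x k" using K_min[OF st] lt K_def by simp
        then have n2: "\<not> chg o2 tau z" using k1 z_def unfolding stop_def by auto
        have "\<not> stop tau' x' k'" using K_min[OF st'] lt K'_def by simp
        then have n2': "\<not> chg o2 tau' z" using k1' zz unfolding stop_def by auto
        have "c2 tau z = c1 L z" using K_old[OF st k1[unfolded K_def]] n2 z_def by simp
        moreover have "c2 tau' z = c1 L z" using K_old[OF st' k1'[unfolded K'_def]] n2' zz by simp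
        ultimately show ?thesis by simp
      qed
      have l: "c2 tau z = f pe qe (ch tau x (k - 1))" "ch tau x (k - 1) \<in> balls pe qe"
        using K_link[OF st k1[unfolded K_def]] z_def by auto
      have l': "c2 tau' z = f pe qe (ch tau' x' (k' - 1))" "ch tau' x' (k' - 1) \<in> balls pe qe"
        using K_link[OF st' k1'[unfolded K'_def]] zz by auto
      have "ch tau x (k - 1) = ch tau' x' (k' - 1)"
        using inj_onD[OF Finj _ l(2) l'(2)] l(1) l'(1) cz by simp
      moreover have "K - Suc m = k - 1" "K' - Suc m = k' - 1" using k_def k'_def by auto
      ultimately show ?case by simp
    qed
  qed
  have x0: "x = ch tau' x' (K' - K)" using claim[of K] by simp
  show ?thesis
  proof (cases "K = K'")
    case True
    then show ?thesis using x0 by simp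
  next
    case False
    define j where "j = K' - K"
    have j: "1 \<le> j" "j \<le> K'" using False KK j_def by auto
    have xn: "x \<notin> B1 L" using st unfolding startp_def by simp
    show ?thesis
    proof (cases "j < K'")
      case True
      have "\<not> stop tau' x' j" using K_min[OF st'] True K'_def by simp
      then have "\<not> chg o2 tau' (ch tau' x' j)" using j unfolding stop_def by auto
      then have "ch tau' x' j \<in> B1 L" using K_old[OF st' j(1) j(2)[unfolded K'_def]] by simp
      then show ?thesis using xn x0 j_def by simp
    next
      case False
      then have jK: "j = K'" "K = 0" using j j_def KK by auto
      have "\<exists>t. phi tau x = Inl (x, t)" using pc jK K_def by auto
      then have "\<not> chg o2 tau' (ch tau' x' K')" using pc' e jK j K'_def by auto
      then have "ch tau' x' K' \<in> B1 L" using K_old[OF st' j(1)[unfolded jK] ] K'_def by simp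
      then show ?thesis using xn x0 jK by simp
    qed
  qed
qed


definition D :: "ball set" where
  "D = {x. x \<in> balls pe qe \<and> x \<notin> B1 L \<and> sg (ins_time o1 x) < sg (ins_time o2 x)}"

definition tauf :: "ball \<Rightarrow> nat" where
  "tauf x = (SOME tau. ins_time o1 x \<le> tau \<and> tau < ins_time o2 x \<and> sg tau \<noteq> sg (Suc tau))"

lemma sg_mono: "L < a \<Longrightarrow> a \<le> b \<Longrightarrow> b \<le> T \<Longrightarrow> sg a \<le> sg b"
  using seg_of_mono[OF mono] by blast

lemma tau_start: "x \<in> D \<Longrightarrow> startp (tauf x) x"
proof -
  assume xD: "x \<in> D"
  let ?i1 = "ins_time o1 x" and ?i2 = "ins_time o2 x"
  have xf: "x \<in> balls pe qe" "x \<notin> B1 L" "sg ?i1 < sg ?i2" using xD D_def by auto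
  have i1: "L < ?i1 \<and> ?i1 \<le> T \<and> x \<in> B1 ?i1 \<and> (\<forall>t<?i1. x \<notin> B1 t)"
    using ins_props[of x o1 T L] xf B1T by simp
  have i2: "L < ?i2 \<and> ?i2 \<le> T \<and> x \<in> B2 ?i2 \<and> (\<forall>t<?i2. x \<notin> B2 t)"
    using ins_props[of x o2 T L] xf B2T BL[of L] by simp
  have lt: "?i1 < ?i2"
  proof (rule ccontr)
    assume "\<not> ?i1 < ?i2"
    then have "sg ?i2 \<le> sg ?i1" using sg_mono i1 i2 by simp
    then show False using xf by simp
  qed
  have "\<exists>tau. ?i1 \<le> tau \<and> tau < ?i2 \<and> sg tau \<noteq> sg (Suc tau)"
    using seg_change[of ?i1 ?i2 sg] lt xf by simp
  then have tau: "?i1 \<le> tauf x \<and> tauf x < ?i2 \<and> sg (tauf x) \<noteq> sg (Suc (tauf x))"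
    unfolding tauf_def by (rule someI_ex)
  have "sg (tauf x) \<le> sg (Suc (tauf x))" using sg_mono[of "tauf x" "Suc (tauf x)"] tau i1 i2 by simp
  then have "sg (tauf x) < sg (Suc (tauf x))" using tau by simp
  moreover have "x \<in> B1 (tauf x)" using i1 tau balls_at_mono[of ?i1 "tauf x" o1] by auto
  moreover have "x \<notin> B2 (tauf x)" using i2 tau by simp
  ultimately show ?thesis unfolding startp_def using tau i1 i2 xf by simp
qed

lemma card_D: "card D \<le> card (Pset f seg pre J1) + card (Pset f seg pre J2)"
proof -
  let ?h = "\<lambda>x. phi (tauf x) x"
  let ?P = "Inl ` Pset f seg pre J1 \<union> Inr ` Pset f seg pre J2 :: ((ball \<times> nat) + (ball \<times> nat)) set"
  have inj: "inj_on ?h D"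
  proof (rule inj_onI)
    fix x x' assume x: "x \<in> D" and x': "x' \<in> D" and e: "?h x = ?h x'"
    have s: "startp (tauf x) x" "startp (tauf x') x'" using tau_start x x' by auto
    show "x = x'"
    proof (cases "Kx (tauf x) x \<le> Kx (tauf x') x'")
      case True
      then show ?thesis using phi_inj_le[OF s(1) s(2) e] by simp
    next
      case False
      then show ?thesis using phi_inj_le[OF s(2) s(1) e[symmetric]] by simp
    qed
  qed
  have sub: "?h ` D \<subseteq> ?P" using phi_mem tau_start by blast
  have fin: "finite ?P" using finite_Pset by blast
  have "card D \<le> card ?P" using card_inj_on_le[OF inj sub fin] .
  also have "card ?P = card (Inl ` Pset f seg pre J1 :: ((ball \<times> nat) + (ball \<times> nat)) set)
       + card (Inr ` Pset f seg pre J2 :: ((ball \<times> nat) + (ball \<times> nat)) set)"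
    by (rule card_Un_disjoint) (auto simp: finite_Pset)
  also have "\<dots> = card (Pset f seg pre J1) + card (Pset f seg pre J2)"
    by (simp add: card_image)
  finally show ?thesis .
qed

end

theorem mainTheorem11:
  fixes f :: "nat \<Rightarrow> nat \<Rightarrow> ball \<Rightarrow> nat"
    and seg :: "nat \<Rightarrow> nat"
    and pre I1 I2 :: "bool list"
    and pst qst pend qend :: nat
  assumes bij: "\<And>p q. bij_betw (f p q) (balls p q) {1..p + q}"
    and segs: "mono_on {..<length I1} seg"
    and start: "state pre (length pre) = (pst, qst)"
    and end1: "state (pre @ I1) (length (pre @ I1)) = (pend, qend)"
    and end2: "state (pre @ I2) (length (pre @ I2)) = (pend, qend)"
    and bal: "pend - pst = qend - qst"
  shows "real (cost_u f seg pre I1) + real (cost_u f seg pre I2)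
           \<ge> real (dist seg pre I1 I2) / 2"
proof -
  have l1: "length (pre @ I1) = pend + qend"
    using state_sum[of "pre @ I1" "length (pre @ I1)"] end1 by simp
  have l2: "length (pre @ I2) = pend + qend"
    using state_sum[of "pre @ I2" "length (pre @ I2)"] end2 by simp
  have len: "length I2 = length I1" using l1 l2 by simp
  have segs2: "mono_on {..<length I2} seg" using segs len by simp
  interpret t12: twoseq f seg pre I1 I2 pend qend
    by (unfold_locales) (use bij segs len end1 end2 in auto)
  interpret t21: twoseq f seg pre I2 I1 pend qend
    by (unfold_locales) (use bij segs2 len end1 end2 in auto)
  have cT: "count_list pre True = pst" "count_list pre False = qst"
    using start unfolding state_def by auto
  have cT1: "count_list (pre @ I1) True = pend" "count_list (pre @ I1) False = qend"
    using end1 unfolding state_def by auto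
  have B0: "balls_at (pre @ I1) (length pre) = balls pst qst"
    "balls_at (pre @ I2) (length pre) = balls pst qst"
    using balls_at_pre[of "length pre" pre I1] balls_at_pre[of "length pre" pre I2] start
    unfolding balls_at_def[of pre] by simp_all
  define S where "S = {x \<in> A ` {count_list pre True + 1 .. count_list (pre @ I1) True}
               \<union> B ` {count_list pre False + 1 .. count_list (pre @ I1) False}.
           seg_of seg pre (ins_time (pre @ I1) x) \<noteq> seg_of seg pre (ins_time (pre @ I2) x)}"
  have dS: "dist seg pre I1 I2 = card S" unfolding dist_def S_def ..
  have sub: "S \<subseteq> t12.D \<union> t21.D"
  proof
    fix x assume xS: "x \<in> S"
    have xin: "x \<in> A ` {pst + 1 .. pend} \<union> B ` {qst + 1 .. qend}"
      using xS unfolding S_def cT cT1 by blast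
    have xb: "x \<in> balls pend qend" using xin unfolding balls_def by auto
    have xnb: "x \<notin> balls pst qst" using xin unfolding balls_def by auto
    have ne: "seg_of seg pre (ins_time (pre @ I1) x) \<noteq> seg_of seg pre (ins_time (pre @ I2) x)"
      using xS unfolding S_def by blast
    then consider "seg_of seg pre (ins_time (pre @ I1) x) < seg_of seg pre (ins_time (pre @ I2) x)"
      | "seg_of seg pre (ins_time (pre @ I2) x) < seg_of seg pre (ins_time (pre @ I1) x)"
      by linarith
    then show "x \<in> t12.D \<union> t21.D"
    proof cases
      case 1
      then have "x \<in> t12.D" unfolding t12.D_def using xb xnb B0 by simp
      then show ?thesis by simp
    next
      case 2
      then have "x \<in> t21.D" unfolding t21.D_def using xb xnb B0 by simp
      then show ?thesis by simp
    qed
  qed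
  have finD: "finite t12.D" "finite t21.D"
    unfolding t12.D_def t21.D_def using finite_balls by auto
  have "card S \<le> card (t12.D \<union> t21.D)" using card_mono[OF _ sub] finD by simp
  also have "\<dots> \<le> card t12.D + card t21.D" by (rule card_Un_le)
  also have "\<dots> \<le> 2 * (cost_u f seg pre I1 + cost_u f seg pre I2)"
    using t12.card_D t21.card_D unfolding cost_Pset by simp
  finally have "dist seg pre I1 I2 \<le> 2 * (cost_u f seg pre I1 + cost_u f seg pre I2)"
    using dS by simp
  then have "real (dist seg pre I1 I2) \<le> 2 * (real (cost_u f seg pre I1) + real (cost_u f seg pre I2))"
    by (metis of_nat_add of_nat_le_iff of_nat_mult of_nat_numeral)
  then show ?thesis by simp
qed

end
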